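(* Let $R_s>0$, $\lambda=2^{R_s}$, and let $\gamma_d,\gamma_e$ be independent, with $\gamma_t$ ($t\in\{d,e\}$) generalized-$K$ distributed with parameters $m_t>0,k_t>0$ and mean $\overline\gamma_t>0$, i.e. with CDF $F_{\gamma_t}(x)=\frac{1}{\Gamma(k_t)\Gamma(m_t)}G_{1,3}^{2,1}\!\left(\frac{k_tm_tx}{\overline\gamma_t}\,\middle|\,{1\atop k_t,m_t,0}\right)$. Let $\sigma_e^2$ be the variance of $\gamma_e$, $P(x)=F_{\gamma_d}(\lambda-1+\lambda x)$, and $\widetilde P_{\rm sop}(\overline\gamma_d):=P(\overline\gamma_e)+\frac{\sigma_e^2}{2}P''(\overline\gamma_e)$. Assume $k_d\neq m_d$ and put $v=\min\{k_d,m_d\}$. Then, with $\overline\gamma_e,\lambda,k_e,m_e,k_d,m_d$ fixed, as $\overline\gamma_d\to\infty$, $$\widetilde P_{\rm sop}(\overline\gamma_d)=\overline\gamma_d^{-v}\,\frac{\Gamma(|k_d-m_d|)(k_dm_d)^v(\lambda-1+\lambda\overline\gamma_e)^v}{\Gamma(k_d)\Gamma(m_d)}\left(\frac1v+\frac{\left(\frac{(k_e+1)(m_e+1)}{k_em_e}-1\right)(v-1)\overline\gamma_e^2\lambda^2}{2(\lambda-1+\lambda\overline\gamma_e)^2}\right)+o(\overline\gamma_d^{-v}).$$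
   Context: $G^{m,n}_{p,q}$ denotes the standard Meijer G-function and $\Gamma$ the Gamma function. The generalized-$K$ distribution with parameters $k,m$ and mean $\overline\gamma$ is that of $\overline\gamma XY$ with $X,Y$ independent unit-mean Gamma variables of shapes $k$ and $m$. $\widetilde P_{\rm sop}$ is the second-order Taylor approximation of the secrecy outage probability $\mathbb{E}\{F_{\gamma_d}(\lambda-1+\lambda\gamma_e)\}$ around the mean of $\gamma_e$. *)

theory Defs
  imports "HOL-Analysis.Analysis" "HOL-Library.Landau_Symbols"
begin

definition gamma_pdf :: "real \<Rightarrow> real \<Rightarrow> real" where
  "gamma_pdf k x = (if x > 0 then k powr k * x powr (k - 1) * exp (- k * x) / Gamma k else 0)"

text \<open>CDF of the generalized-K distribution with parameters k, m and mean g,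
  i.e. the CDF of g*X*Y with X ~ Gamma(k, unit mean), Y ~ Gamma(m, unit mean)
  independent (this equals the Meijer-G expression of the paper).\<close>
definition genK_cdf :: "real \<Rightarrow> real \<Rightarrow> real \<Rightarrow> real \<Rightarrow> real" where
  "genK_cdf k m g x =
     (LINT t|lborel. gamma_pdf m t *
        (LINT s|lborel. indicator {s. g * s * t \<le> x} s * gamma_pdf k s))"

definition genK_var :: "real \<Rightarrow> real \<Rightarrow> real \<Rightarrow> real" where
  "genK_var k m g =
     (LINT t|lborel. gamma_pdf m t *
        (LINT s|lborel. (g * s * t - g)\<^sup>2 * gamma_pdf k s))"

definition sop_approx ::
  "real \<Rightarrow> real \<Rightarrow> real \<Rightarrow> real \<Rightarrow> real \<Rightarrow> real \<Rightarrow> real \<Rightarrow> real" where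
  "sop_approx lam kd md ke me ge gd =
     (let P = (\<lambda>x. genK_cdf kd md gd (lam - 1 + lam * x))
      in P ge + genK_var ke me ge / 2 * deriv (deriv P) ge)"

end

theory Submission
  imports Defs
begin

lemma gamma_nn:
  fixes a b :: real assumes a: "a > 0" and b: "b > 0"
  shows "has_bochner_integral lborel (\<lambda>t. indicator {0..} t * t powr (a - 1) * exp (- b * t)) (Gamma a / b powr a)"
proof -
  have "ennreal (Gamma a) = (\<integral>\<^sup>+t. ennreal (indicator {0..} t * t powr (a - 1) / exp t) \<partial>lborel)"
    using Gamma_conv_nn_integral_real[OF a] by simp
  also have "\<dots> = b * (\<integral>\<^sup>+x. ennreal (indicator {0..} (0 + b * x) * (0 + b * x) powr (a - 1) / exp (0 + b * x)) \<partial>lborel)"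
    using b by (subst nn_integral_real_affine[where c=b and t=0]) auto
  also have "\<dots> = b * (\<integral>\<^sup>+x. ennreal (b powr (a - 1)) * ennreal (indicator {0..} x * x powr (a - 1) * exp (- b * x)) \<partial>lborel)"
  proof (intro arg_cong2[where f="(*)"] refl nn_integral_cong)
    fix x :: real
    have "indicator {0..} (0 + b * x) * (0 + b * x) powr (a - 1) / exp (0 + b * x)
        = b powr (a - 1) * (indicator {0..} x * x powr (a - 1) * exp (- b * x))"
      using b by (auto simp: indicator_def powr_mult exp_minus field_simps zero_le_mult_iff)
    then show "ennreal (indicator {0..} (0 + b * x) * (0 + b * x) powr (a - 1) / exp (0 + b * x))
        = ennreal (b powr (a - 1)) * ennreal (indicator {0..} x * x powr (a - 1) * exp (- b * x))"
      by (metis ennreal_mult' powr_ge_zero)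
  qed
  also have "\<dots> = ennreal (b * b powr (a - 1)) * (\<integral>\<^sup>+x. ennreal (indicator {0..} x * x powr (a - 1) * exp (- b * x)) \<partial>lborel)"
    using b by (subst nn_integral_cmult) (auto simp: ennreal_mult mult.assoc)
  also have "b * b powr (a - 1) = b powr a"
    using b by (simp add: powr_diff)
  finally have eq: "ennreal (Gamma a) = ennreal (b powr a) * (\<integral>\<^sup>+x. ennreal (indicator {0..} x * x powr (a - 1) * exp (- b * x)) \<partial>lborel)" .
  have bp: "b powr a > 0" using b by simp
  have "(\<integral>\<^sup>+x. ennreal (indicator {0..} x * x powr (a - 1) * exp (- b * x)) \<partial>lborel) = ennreal (Gamma a / b powr a)"
  proof -
    have "ennreal (Gamma a / b powr a) = ennreal (Gamma a) / ennreal (b powr a)"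
      using bp a by (simp add: divide_ennreal Gamma_real_pos)
    also have "\<dots> = (\<integral>\<^sup>+x. ennreal (indicator {0..} x * x powr (a - 1) * exp (- b * x)) \<partial>lborel)"
      unfolding eq using bp by (simp add: mult.commute[of "ennreal (b powr a)"] ennreal_mult_divide_eq)
    finally show ?thesis by simp
  qed
  then show ?thesis
    using a b by (intro has_bochner_integral_nn_integral) (auto simp: indicator_def Gamma_real_pos intro!: divide_nonneg_pos)
qed

lemma pdf_pos: "t > 0 \<Longrightarrow> gamma_pdf k t = k powr k / Gamma k * t powr (k - 1) * exp (- k * t)"
  by (simp add: gamma_pdf_def)

lemma pdf_nonpos: "t \<le> 0 \<Longrightarrow> gamma_pdf k t = 0"
  by (simp add: gamma_pdf_def)

lemma pdf_nonneg: "k > 0 \<Longrightarrow> 0 \<le> gamma_pdf k t"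
  by (simp add: gamma_pdf_def Gamma_real_pos less_imp_le)

lemma pdf_meas[measurable]: "gamma_pdf k \<in> borel_measurable borel"
  unfolding gamma_pdf_def by measurable

lemma pdf_moment:
  assumes k: "k > 0" and kr: "k + r > 0"
  shows "has_bochner_integral lborel (\<lambda>t. t powr r * gamma_pdf k t) (Gamma (k + r) / (Gamma k * k powr r))"
proof -
  have "has_bochner_integral lborel (\<lambda>t. k powr k / Gamma k * (indicator {0..} t * t powr (k + r - 1) * exp (- k * t)))
      (k powr k / Gamma k * (Gamma (k + r) / k powr (k + r)))"
    by (intro has_bochner_integral_mult_right gamma_nn kr k)
  moreover have "(\<lambda>t. k powr k / Gamma k * (indicator {0..} t * t powr (k + r - 1) * exp (- k * t)))
      = (\<lambda>t. t powr r * gamma_pdf k t)"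
  proof
    fix t :: real
    show "k powr k / Gamma k * (indicator {0..} t * t powr (k + r - 1) * exp (- k * t)) = t powr r * gamma_pdf k t"
      proof (cases "t > 0")
      case True
      have "t powr (k + r - 1) = t powr r * t powr (k - 1)"
        using True by (simp add: powr_add[symmetric] algebra_simps)
      then show ?thesis using True by (simp add: pdf_pos indicator_def)
    next
      case False
      then show ?thesis by (cases "t = 0") (auto simp: pdf_nonpos indicator_def)
    qed
  qed
  moreover have "k powr k / Gamma k * (Gamma (k + r) / k powr (k + r)) = Gamma (k + r) / (Gamma k * k powr r)"
    using k by (simp add: powr_add Gamma_real_pos less_imp_neq[symmetric])
  ultimately show ?thesis by simp
qed

lemma pdf_int1: "k > 0 \<Longrightarrow> has_bochner_integral lborel (gamma_pdf k) 1"
  using pdf_moment[of k 0]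
proof -
  assume k: "k > 0"
  have "(\<lambda>t. t powr 0 * gamma_pdf k t) = gamma_pdf k"
    by (rule ext) (simp add: gamma_pdf_def)
  then show ?thesis using pdf_moment[of k 0] k by (simp add: Gamma_real_pos less_imp_neq[symmetric])
qed

lemma mvt_bound:
  fixes f f' :: "real \<Rightarrow> real"
  assumes der: "\<And>z. z \<in> ball x r \<Longrightarrow> DERIV f z :> f' z"
    and bnd: "\<And>z. z \<in> ball x r \<Longrightarrow> \<bar>f' z\<bar> \<le> M" and y: "y \<in> ball x r"
  shows "\<bar>f y - f x\<bar> \<le> M * \<bar>y - x\<bar>"
proof (cases y x rule: linorder_cases)
  case less
  have "\<And>z. y \<le> z \<Longrightarrow> z \<le> x \<Longrightarrow> z \<in> ball x r"
    using y by (auto simp: dist_real_def)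
  then obtain z where z: "y < z" "z < x" "f x - f y = (x - y) * f' z"
    using MVT2[OF less, of f f'] der by blast
  have "z \<in> ball x r" using z y by (auto simp: dist_real_def)
  then have "\<bar>f' z\<bar> \<le> M" by (rule bnd)
  then show ?thesis using z less by (simp add: abs_mult abs_minus_commute mult.commute mult_left_mono)
next
  case equal then show ?thesis by simp
next
  case greater
  have "\<And>z. x \<le> z \<Longrightarrow> z \<le> y \<Longrightarrow> z \<in> ball x r"
    using y by (auto simp: dist_real_def)
  then obtain z where z: "x < z" "z < y" "f y - f x = (y - x) * f' z"
    using MVT2[OF greater, of f f'] der by blast
  have "z \<in> ball x r" using z y by (auto simp: dist_real_def)
  then have "\<bar>f' z\<bar> \<le> M" by (rule bnd)
  then show ?thesis using z greater by (simp add: abs_mult mult.commute mult_left_mono)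
qed

lemma DCT_within:
  fixes s :: "real \<Rightarrow> real \<Rightarrow> real" and f w :: "real \<Rightarrow> real"
  assumes f: "f \<in> borel_measurable lborel"
    and w: "integrable lborel w"
    and lim: "\<And>t. ((\<lambda>y. s y t) \<longlongrightarrow> f t) (at x within S)"
    and bnd: "eventually (\<lambda>y. s y \<in> borel_measurable lborel \<and> (\<forall>t. \<bar>s y t\<bar> \<le> w t)) (at x within S)"
  shows "((\<lambda>y. LINT t|lborel. s y t) \<longlongrightarrow> (LINT t|lborel. f t)) (at x within S)"
proof (subst tendsto_at_iff_sequentially, intro allI impI)
  fix X :: "nat \<Rightarrow> real" assume X: "\<forall>i. X i \<in> S - {x}" "X \<longlonglongrightarrow> x"
  then have FX: "filterlim X (at x within S) sequentially" by (auto simp: filterlim_at)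
  from filterlim_iff[THEN iffD1, OF FX, rule_format, OF bnd] obtain N
    where N: "\<And>n. N \<le> n \<Longrightarrow> s (X n) \<in> borel_measurable lborel \<and> (\<forall>t. \<bar>s (X n) t\<bar> \<le> w t)" by (auto simp: eventually_sequentially)
  show "((\<lambda>y. LINT t|lborel. s y t) \<circ> X) \<longlonglongrightarrow> (LINT t|lborel. f t)"
    unfolding comp_def
  proof (rule LIMSEQ_offset[where k=N], rule integral_dominated_convergence[where w=w])
    show "AE t in lborel. (\<lambda>n. s (X (n + N)) t) \<longlonglongrightarrow> f t"
    proof (rule AE_I2)
      fix t
      have "(\<lambda>n. s (X n) t) \<longlonglongrightarrow> f t"
        using filterlim_compose[OF lim FX] .
      then show "(\<lambda>n. s (X (n + N)) t) \<longlonglongrightarrow> f t"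
        by (rule LIMSEQ_ignore_initial_segment)
    qed
    show "AE t in lborel. norm (s (X (n + N)) t) \<le> w t" for n
      using N[of "n + N"] by auto
  qed (use f w N in auto)
qed

lemma deriv_under_int:
  fixes F F' :: "real \<Rightarrow> real \<Rightarrow> real" and w :: "real \<Rightarrow> real"
  assumes r: "r > 0"
    and intF: "\<And>y. y \<in> ball x r \<Longrightarrow> integrable lborel (F y)"
    and measF': "F' x \<in> borel_measurable lborel"
    and der: "\<And>y t. y \<in> ball x r \<Longrightarrow> ((\<lambda>y. F y t) has_real_derivative F' y t) (at y)"
    and bnd: "\<And>y t. y \<in> ball x r \<Longrightarrow> \<bar>F' y t\<bar> \<le> w t"
    and w: "integrable lborel w"
  shows "((\<lambda>y. LINT t|lborel. F y t) has_real_derivative (LINT t|lborel. F' x t)) (at x)"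
  unfolding has_field_derivative_iff
proof -
  have x: "x \<in> ball x r" using r by simp
  have ev: "eventually (\<lambda>y. y \<in> ball x r \<and> y \<noteq> x) (at x)"
    using eventually_at_ball'[OF r, of x UNIV] by simp
  have "((\<lambda>y. LINT t|lborel. (F y t - F x t) / (y - x)) \<longlongrightarrow> (LINT t|lborel. F' x t)) (at x)"
  proof (rule DCT_within[where w=w])
    show "((\<lambda>y. (F y t - F x t) / (y - x)) \<longlongrightarrow> F' x t) (at x)" for t
      using der[OF x, of t] unfolding has_field_derivative_iff .
    show "eventually (\<lambda>y. (\<lambda>t. (F y t - F x t) / (y - x)) \<in> borel_measurable lborel \<and> (\<forall>t. \<bar>(F y t - F x t) / (y - x)\<bar> \<le> w t)) (at x)"
      using ev
    proof eventually_elim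
      case (elim y)
      show ?case
      proof (intro conjI)
        show "(\<lambda>t. (F y t - F x t) / (y - x)) \<in> borel_measurable lborel"
          using intF[of y] intF[OF x] elim by (intro borel_measurable_divide borel_measurable_diff) auto
      next
        show "\<forall>t. \<bar>(F y t - F x t) / (y - x)\<bar> \<le> w t"
      proof
        fix t
        have "\<bar>F y t - F x t\<bar> \<le> w t * \<bar>y - x\<bar>"
          by (rule mvt_bound[where r=r and f'="\<lambda>y. F' y t"]) (use der bnd elim in auto)
        then show "\<bar>(F y t - F x t) / (y - x)\<bar> \<le> w t"
          using elim by (simp add: abs_divide divide_le_eq)
      qed
      qed
    qed
  qed (use measF' w in auto)
  moreover have ev2: "eventually (\<lambda>y. (LINT t|lborel. (F y t - F x t) / (y - x)) = ((LINT t|lborel. F y t) - (LINT t|lborel. F x t)) / (y - x)) (at x)"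
    using ev
  proof eventually_elim
    case (elim y)
    then show ?case using intF[of y] intF[OF x] by simp
  qed
  ultimately show "((\<lambda>y. ((LINT t|lborel. F y t) - (LINT t|lborel. F x t)) / (y - x)) \<longlongrightarrow> (LINT t|lborel. F' x t)) (at x)"
    using tendsto_cong[OF ev2] by simp
qed

definition Gk :: "real \<Rightarrow> real \<Rightarrow> real" where
  "Gk k u = (LINT s|lborel. indicator {..u} s * gamma_pdf k s)"

lemma ind_int: "k > 0 \<Longrightarrow> A \<in> sets borel \<Longrightarrow> integrable lborel (\<lambda>s. indicator A s * gamma_pdf k s)"
  using pdf_int1[of k] integrable_mult_indicator[of A lborel "gamma_pdf k"]
  by (auto simp: has_bochner_integral_iff)

lemma Gk_integrable: "k > 0 \<Longrightarrow> integrable lborel (\<lambda>s. indicator {..u} s * gamma_pdf k s)"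
  by (rule ind_int) auto

lemma Gk_nonneg: "k > 0 \<Longrightarrow> 0 \<le> Gk k u"
  unfolding Gk_def by (intro integral_nonneg_AE) (auto simp: pdf_nonneg)

lemma Gk_mono: "k > 0 \<Longrightarrow> u \<le> v \<Longrightarrow> Gk k u \<le> Gk k v"
  unfolding Gk_def
  by (intro integral_mono Gk_integrable) (auto simp: indicator_def pdf_nonneg)

lemma Gk_meas[measurable]: "k > 0 \<Longrightarrow> Gk k \<in> borel_measurable borel"
  by (rule borel_measurable_mono) (auto simp: mono_def Gk_mono)

lemma Gk_le1: "k > 0 \<Longrightarrow> Gk k u \<le> 1"
proof -
  assume k: "k > 0"
  have "Gk k u \<le> (LINT s|lborel. gamma_pdf k s)"
    unfolding Gk_def using pdf_int1[OF k]
    by (intro integral_mono Gk_integrable k) (auto simp: indicator_def pdf_nonneg k has_bochner_integral_iff)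
  then show ?thesis using pdf_int1[OF k] by (simp add: has_bochner_integral_iff)
qed

lemma Gk_bound:
  assumes k: "k > 0" and u: "u \<ge> 0"
  shows "Gk k u \<le> k powr k / Gamma k * (u powr k / k)"
proof -
  have "integral\<^sup>N lborel (\<lambda>s. indicator {0..u} s * s powr (k - 1)) = u powr (k - 1 + 1) / (k - 1 + 1)"
    by (rule nn_integral_has_integral_lebesgue) (use has_integral_powr_from_0[of "k - 1" u] k u in auto)
  then have hb: "has_bochner_integral lborel (\<lambda>s. indicator {0..u} s * s powr (k - 1)) (u powr k / k)"
    using k u by (intro has_bochner_integral_nn_integral) (auto simp: indicator_def)
  have "Gk k u \<le> (LINT s|lborel. k powr k / Gamma k * (indicator {0..u} s * s powr (k - 1)))"
    unfolding Gk_def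
  proof (intro integral_mono Gk_integrable k)
    show "integrable lborel (\<lambda>s. k powr k / Gamma k * (indicator {0..u} s * s powr (k - 1)))"
      using hb by (auto simp: has_bochner_integral_iff)
    fix s :: real
    show "indicator {..u} s * gamma_pdf k s \<le> k powr k / Gamma k * (indicator {0..u} s * s powr (k - 1))"
    proof (cases "s > 0")
      case True
      have e: "exp (- k * s) \<le> 1" using k True by simp
      have "k powr k / Gamma k * s powr (k - 1) * exp (- k * s) \<le> k powr k / Gamma k * s powr (k - 1) * 1"
        by (rule mult_left_mono[OF e]) (use k in \<open>auto simp: Gamma_real_pos\<close>)
      then show ?thesis using k True
        by (auto simp: pdf_pos indicator_def)
    next
      case False
      then show ?thesis using k by (auto simp: pdf_nonpos indicator_def Gamma_real_pos)
    qed
  qed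
  also have "\<dots> = k powr k / Gamma k * (u powr k / k)"
    using hb by (simp add: has_bochner_integral_iff)
  finally show ?thesis .
qed

lemma pdf_cont: "0 < a \<Longrightarrow> continuous_on {a..b} (gamma_pdf k)"
proof -
  assume a: "0 < a"
  have "continuous_on {a..b} (\<lambda>t. k powr k / Gamma k * t powr (k - 1) * exp (- k * t))"
    using a by (intro continuous_intros) auto
  then show ?thesis
    by (rule continuous_on_cong[THEN iffD1, rotated 2]) (use a in \<open>auto simp: pdf_pos\<close>)
qed

lemma Gk_deriv:
  assumes k: "k > 0" and u: "u > 0"
  shows "DERIV (Gk k) u :> gamma_pdf k u"
proof -
  define a where "a = u / 2"
  define b where "b = 2 * u"
  have ab: "0 < a" "a < u" "u < b" using u by (auto simp: a_def b_def)
  define C where "C = (LINT s|lborel. indicator {..<a} s * gamma_pdf k s)"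
  have eq: "Gk k v = C + integral {a..v} (gamma_pdf k)" if v: "v \<ge> a" for v
  proof -
    have si: "set_integrable lborel {a..v} (gamma_pdf k)"
      by (rule borel_integrable_atLeastAtMost') (rule pdf_cont, fact)
    have "Gk k v = (LINT s|lborel. indicator {..<a} s * gamma_pdf k s + indicator {a..v} s * gamma_pdf k s)"
      unfolding Gk_def using v by (intro Bochner_Integration.integral_cong) (auto simp: indicator_def)
    also have "\<dots> = C + (LINT s|lborel. indicator {a..v} s * gamma_pdf k s)"
      unfolding C_def
    proof (rule Bochner_Integration.integral_add)
      show "integrable lborel (\<lambda>s. indicator {..<a} s * gamma_pdf k s)"
        by (rule ind_int) (use k in auto)
      show "integrable lborel (\<lambda>s. indicator {a..v} s * gamma_pdf k s)"
        using si by (simp add: set_integrable_def)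
    qed
    also have "(LINT s|lborel. indicator {a..v} s * gamma_pdf k s) = integral {a..v} (gamma_pdf k)"
      using set_borel_integral_eq_integral(2)[OF si] by (simp add: set_lebesgue_integral_def)
    finally show ?thesis .
  qed
  have "((\<lambda>v. integral {a..v} (gamma_pdf k)) has_real_derivative gamma_pdf k u) (at u within {a..b})"
    by (rule integral_has_real_derivative) (use ab pdf_cont in auto)
  then have d: "((\<lambda>v. C + integral {a..v} (gamma_pdf k)) has_real_derivative gamma_pdf k u) (at u)"
    using ab by (auto simp: at_within_Icc_at intro!: derivative_eq_intros)
  have ev: "eventually (\<lambda>v. Gk k v = C + integral {a..v} (gamma_pdf k)) (nhds u)"
    using eventually_gt_at_top ab eq
    by (metis (mono_tags, lifting) eventually_nhds_in_open greaterThan_iff less_imp_le open_greaterThan eventually_mono)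
  show ?thesis
    using d by (subst DERIV_cong_ev[OF refl ev refl])
qed

definition dpdf :: "real \<Rightarrow> real \<Rightarrow> real" where
  "dpdf k u = k powr k / Gamma k * ((k - 1) * u powr (k - 2) - k * u powr (k - 1)) * exp (- k * u)"

lemma pdf_deriv:
  assumes u: "u > 0"
  shows "DERIV (gamma_pdf k) u :> dpdf k u"
proof -
  have d1: "DERIV (\<lambda>u. u powr (k - 1)) u :> (k - 1) * u powr (k - 1 - 1)"
    by (rule has_real_derivative_powr[OF u])
  have d2: "DERIV (\<lambda>u. exp (- k * u)) u :> exp (- k * u) * (- k)"
    by (rule DERIV_fun_exp) (intro derivative_eq_intros, auto)
  have d3: "DERIV (\<lambda>u. u powr (k - 1) * exp (- k * u)) u :>
      (k - 1) * u powr (k - 1 - 1) * exp (- k * u) + exp (- k * u) * (- k) * u powr (k - 1)"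
    by (rule DERIV_mult[OF d1 d2])
  have d4: "DERIV (\<lambda>u. k powr k / Gamma k * (u powr (k - 1) * exp (- k * u))) u :>
      k powr k / Gamma k * ((k - 1) * u powr (k - 1 - 1) * exp (- k * u) + exp (- k * u) * (- k) * u powr (k - 1))"
    by (rule DERIV_cmult[OF d3])
  have e: "k - 1 - 1 = k - 2" by simp
  have "k powr k / Gamma k * ((k - 1) * u powr (k - 1 - 1) * exp (- k * u) + exp (- k * u) * (- k) * u powr (k - 1))
     = dpdf k u"
    unfolding dpdf_def e by (simp add: algebra_simps)
  with d4 have d: "DERIV (\<lambda>u. k powr k / Gamma k * u powr (k - 1) * exp (- k * u)) u :> dpdf k u"
    by (simp add: mult.assoc)
  have ev: "eventually (\<lambda>v. gamma_pdf k v = k powr k / Gamma k * v powr (k - 1) * exp (- k * v)) (nhds u)"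
    using eventually_nhds_in_open[of "{0<..}" u] u
    by (auto elim!: eventually_mono simp: pdf_pos)
  show ?thesis using d by (subst DERIV_cong_ev[OF refl ev refl])
qed

lemma exp_bound:
  fixes p q u :: real
  assumes p: "p > 0" and q: "q > 0" and u: "u \<ge> 0"
  shows "u powr p * exp (- q * u) \<le> (p / q) powr p"
proof (cases "u = 0")
  case True then show ?thesis by simp
next
  case False
  with u have u: "u > 0" by simp
  have "q * u / p \<le> exp (q * u / p)"
    using exp_ge_add_one_self[of "q * u / p"] by linarith
  then have "(q * u / p) powr p \<le> exp (q * u / p) powr p"
    using p q u by (intro powr_mono2) auto
  also have "\<dots> = exp (q * u)" using p by (simp add: exp_powr_real)
  finally have "(q / p) powr p * u powr p \<le> exp (q * u)"
    using p q u by (simp add: powr_mult powr_divide)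
  then have "u powr p \<le> exp (q * u) * (p / q) powr p"
    using p q by (simp add: powr_divide field_simps)
  then show ?thesis
    by (simp add: exp_minus field_simps)
qed

lemma powr_div_shift:
  fixes c t a :: real
  assumes "c > 0" "t > 0"
  shows "(c / t) powr a / t = (c / t) powr (a + 1) / c"
  using assms by (simp add: powr_add field_simps)

definition F0 :: "real \<Rightarrow> real \<Rightarrow> real \<Rightarrow> real \<Rightarrow> real" where
  "F0 k m c t = gamma_pdf m t * Gk k (c / t)"
definition F1 :: "real \<Rightarrow> real \<Rightarrow> real \<Rightarrow> real \<Rightarrow> real" where
  "F1 k m c t = gamma_pdf m t * gamma_pdf k (c / t) / t"
definition F2 :: "real \<Rightarrow> real \<Rightarrow> real \<Rightarrow> real \<Rightarrow> real" where
  "F2 k m c t = gamma_pdf m t * dpdf k (c / t) / t ^ 2"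

lemma F0_deriv:
  assumes k: "k > 0" and c: "c > 0"
  shows "DERIV (\<lambda>c. F0 k m c t) c :> F1 k m c t"
proof (cases "t > 0")
  case True
  have d1: "DERIV (\<lambda>c. c / t) c :> 1 / t" by (intro derivative_eq_intros) (use True in auto)
  have d2: "DERIV (\<lambda>c. Gk k (c / t)) c :> gamma_pdf k (c / t) * (1 / t)"
    by (rule DERIV_chain2[OF Gk_deriv[OF k] d1]) (use c True in auto)
  have "DERIV (\<lambda>c. gamma_pdf m t * Gk k (c / t)) c :> gamma_pdf m t * (gamma_pdf k (c / t) * (1 / t))"
    by (rule DERIV_cmult[OF d2])
  then show ?thesis unfolding F0_def F1_def by simp
next
  case False
  then show ?thesis unfolding F0_def F1_def by (simp add: pdf_nonpos)
qed

lemma F1_deriv: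
  assumes c: "c > 0"
  shows "DERIV (\<lambda>c. F1 k m c t) c :> F2 k m c t"
proof (cases "t > 0")
  case True
  have d1: "DERIV (\<lambda>c. c / t) c :> 1 / t" by (intro derivative_eq_intros) (use True in auto)
  have d2: "DERIV (\<lambda>c. gamma_pdf k (c / t)) c :> dpdf k (c / t) * (1 / t)"
    by (rule DERIV_chain2[OF pdf_deriv d1]) (use c True in auto)
  have "DERIV (\<lambda>c. gamma_pdf m t * gamma_pdf k (c / t) / t) c :> gamma_pdf m t * (dpdf k (c / t) * (1 / t)) / t"
    by (intro DERIV_cdivide DERIV_cmult[OF d2])
  then show ?thesis unfolding F1_def F2_def by (simp add: power2_eq_square)
next
  case False
  then show ?thesis unfolding F1_def F2_def by (simp add: pdf_nonpos)
qed

lemma F1_bound: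
  assumes k: "k > 0" and m: "m > 0" and c: "c > 0"
  shows "\<bar>F1 k m c t\<bar> \<le> gamma_pdf m t * (k powr k / Gamma k / c)"
proof (cases "t > 0")
  case True
  define u where "u = c / t"
  have u: "u > 0" using c True by (simp add: u_def)
  have sh: "u powr (k - 1) / t = u powr k / c"
    using powr_div_shift[OF c True, of "k - 1"] by (simp add: u_def)
  have "F1 k m c t = gamma_pdf m t * (k powr k / Gamma k * exp (- k * u)) * (u powr (k - 1) / t)"
    unfolding F1_def using u by (simp add: pdf_pos u_def[symmetric])
  also have "\<dots> = gamma_pdf m t * (k powr k / Gamma k / c * (u powr k * exp (- k * u)))"
    unfolding sh by simp
  finally have "F1 k m c t = gamma_pdf m t * (k powr k / Gamma k / c * (u powr k * exp (- k * u)))" .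
  moreover have "u powr k * exp (- k * u) \<le> 1"
    using exp_bound[of k k u] k u by simp
  moreover have "gamma_pdf m t * (k powr k / Gamma k / c * (u powr k * exp (- k * u)))
     \<le> gamma_pdf m t * (k powr k / Gamma k / c * 1)"
    by (intro mult_left_mono) (use k m c calculation(2) in \<open>auto simp: pdf_nonneg Gamma_real_pos\<close>)
  moreover have "0 \<le> F1 k m c t" using calculation(1) k m c u
    by (simp add: pdf_nonneg Gamma_real_pos)
  ultimately show ?thesis by simp
next
  case False
  then show ?thesis unfolding F1_def by (simp add: pdf_nonpos)
qed

lemma aux_div: "(T::real) \<noteq> 0 \<Longrightarrow> B * (a * A - b * C) * E / T = B * (a * (A / T) - b * (C / T)) * E"
  by (simp add: field_simps)

lemma F2_eq:
  assumes c: "c > 0" and t: "t > 0"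
  shows "F2 k m c t = gamma_pdf m t * (k powr k / Gamma k / c ^ 2) *
     (((k - 1) * (c / t) powr k - k * (c / t) powr (k + 1)) * exp (- k * (c / t)))"
proof -
  define u where "u = c / t"
  have s1: "u powr (k - 2) / t ^ 2 = u powr k / c ^ 2"
  proof -
    have "u powr (k - 2) / t ^ 2 = (u powr (k - 2) / t) / t" by (simp add: power2_eq_square)
    also have "\<dots> = u powr (k - 1) / t / c" using powr_div_shift[OF c t, of "k - 2"] by (simp add: u_def)
    also have "\<dots> = u powr k / c / c" using powr_div_shift[OF c t, of "k - 1"] by (simp add: u_def)
    finally show ?thesis by (simp add: power2_eq_square)
  qed
  have s2: "u powr (k - 1) / t ^ 2 = u powr (k + 1) / c ^ 2"
  proof -
    have "u powr (k - 1) / t ^ 2 = (u powr (k - 1) / t) / t" by (simp add: power2_eq_square)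
    also have "\<dots> = u powr k / t / c" using powr_div_shift[OF c t, of "k - 1"] by (simp add: u_def)
    also have "\<dots> = u powr (k + 1) / c / c" using powr_div_shift[OF c t, of "k"] by (simp add: u_def)
    finally show ?thesis by (simp add: power2_eq_square)
  qed
  have "F2 k m c t = gamma_pdf m t * (dpdf k u / t ^ 2)" by (simp add: F2_def u_def)
  also have "dpdf k u / t ^ 2 = (k powr k / Gamma k) * ((k - 1) * (u powr (k - 2) / t ^ 2) - k * (u powr (k - 1) / t ^ 2)) * exp (- k * u)"
    unfolding dpdf_def using t by (intro aux_div) simp
  also have "(k powr k / Gamma k) * ((k - 1) * (u powr (k - 2) / t ^ 2) - k * (u powr (k - 1) / t ^ 2)) * exp (- k * u)
     = (k powr k / Gamma k) * ((k - 1) * u powr k - k * u powr (k + 1)) * exp (- k * u) / c ^ 2"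
    unfolding s1 s2 using c by (intro aux_div[symmetric]) simp
  also have "gamma_pdf m t * ((k powr k / Gamma k) * ((k - 1) * u powr k - k * u powr (k + 1)) * exp (- k * u) / c ^ 2)
     = gamma_pdf m t * (k powr k / Gamma k / c ^ 2) * (((k - 1) * u powr k - k * u powr (k + 1)) * exp (- k * u))"
    by simp
  finally show ?thesis by (simp add: u_def)
qed

lemma F2_bound:
  assumes k: "k > 0" and m: "m > 0" and c: "c > 0"
  shows "\<bar>F2 k m c t\<bar> \<le> gamma_pdf m t * (k powr k / Gamma k / c ^ 2 * (\<bar>k - 1\<bar> + k * ((k + 1) / k) powr (k + 1)))"
proof (cases "t > 0")
  case True
  define u where "u = c / t"
  have u: "u > 0" using c True by (simp add: u_def)
  have b1: "u powr k * exp (- k * u) \<le> 1" using exp_bound[of k k u] k u by simp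
  have b2: "u powr (k + 1) * exp (- k * u) \<le> ((k + 1) / k) powr (k + 1)" using exp_bound[of "k + 1" k u] k u by simp
  define X where "X = u powr k * exp (- k * u)"
  define Y where "Y = u powr (k + 1) * exp (- k * u)"
  have X: "X \<ge> 0" and Y: "Y \<ge> 0" by (simp_all add: X_def Y_def)
  have "((k - 1) * u powr k - k * u powr (k + 1)) * exp (- k * u) = (k - 1) * X - k * Y"
    by (simp add: X_def Y_def algebra_simps)
  moreover have "\<bar>(k - 1) * X - k * Y\<bar> \<le> \<bar>(k - 1) * X\<bar> + \<bar>k * Y\<bar>"
    by (rule abs_triangle_ineq4)
  moreover have "\<bar>(k - 1) * X\<bar> = \<bar>k - 1\<bar> * X" "\<bar>k * Y\<bar> = k * Y"
    using X Y k by (simp_all add: abs_mult)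
  ultimately have "\<bar>((k - 1) * u powr k - k * u powr (k + 1)) * exp (- k * u)\<bar>
      \<le> \<bar>k - 1\<bar> * (u powr k * exp (- k * u)) + k * (u powr (k + 1) * exp (- k * u))"
    by (simp add: X_def Y_def)
  also have "\<dots> \<le> \<bar>k - 1\<bar> * 1 + k * ((k + 1) / k) powr (k + 1)"
    using b1 b2 k by (intro add_mono mult_left_mono) auto
  finally have B: "\<bar>((k - 1) * u powr k - k * u powr (k + 1)) * exp (- k * u)\<bar> \<le> \<bar>k - 1\<bar> + k * ((k + 1) / k) powr (k + 1)"
    by simp
  have "\<bar>F2 k m c t\<bar> = gamma_pdf m t * (k powr k / Gamma k / c ^ 2) * \<bar>((k - 1) * u powr k - k * u powr (k + 1)) * exp (- k * u)\<bar>"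
    unfolding F2_eq[OF c True] u_def[symmetric] using k m c
    by (simp add: abs_mult pdf_nonneg Gamma_real_pos)
  also have "\<dots> \<le> gamma_pdf m t * (k powr k / Gamma k / c ^ 2) * (\<bar>k - 1\<bar> + k * ((k + 1) / k) powr (k + 1))"
    by (intro mult_left_mono B) (use k m c in \<open>auto simp: pdf_nonneg Gamma_real_pos\<close>)
  finally show ?thesis by simp
next
  case False
  then show ?thesis unfolding F2_def using k m c
    by (simp add: pdf_nonpos)
qed

lemma dpdf_meas[measurable]: "dpdf k \<in> borel_measurable borel"
  unfolding dpdf_def by measurable

lemma F0_meas: "k > 0 \<Longrightarrow> F0 k m c \<in> borel_measurable borel"
proof -
  assume k: "k > 0"
  note [measurable] = Gk_meas[OF k]
  show ?thesis unfolding F0_def by measurable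
qed

lemma F1_meas: "F1 k m c \<in> borel_measurable borel"
  unfolding F1_def by measurable

lemma F2_meas: "F2 k m c \<in> borel_measurable borel"
  unfolding F2_def by measurable

lemma pdf_integrable: "m > 0 \<Longrightarrow> integrable lborel (gamma_pdf m)"
  using pdf_int1 by (auto simp: has_bochner_integral_iff)

lemma F0_int: "k > 0 \<Longrightarrow> m > 0 \<Longrightarrow> integrable lborel (F0 k m c)"
  by (rule Bochner_Integration.integrable_bound[OF pdf_integrable[of m]])
     (auto simp: F0_meas F0_def abs_mult pdf_nonneg Gk_nonneg Gk_le1 mult_left_le)

lemma F1_int: "k > 0 \<Longrightarrow> m > 0 \<Longrightarrow> c > 0 \<Longrightarrow> integrable lborel (F1 k m c)"
proof (rule Bochner_Integration.integrable_bound[where f="\<lambda>t. gamma_pdf m t * (k powr k / Gamma k / c)"])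
  assume k: "k > 0" and m: "m > 0" and c: "c > 0"
  show "integrable lborel (\<lambda>t. gamma_pdf m t * (k powr k / Gamma k / c))" using pdf_integrable[OF m] by simp
  show "F1 k m c \<in> borel_measurable lborel" using F1_meas by simp
  have "\<And>t. \<bar>F1 k m c t\<bar> \<le> \<bar>gamma_pdf m t * (k powr k / Gamma k / c)\<bar>"
    using order_trans[OF F1_bound[OF k m c] abs_ge_self] .
  then show "AE t in lborel. norm (F1 k m c t) \<le> norm (gamma_pdf m t * (k powr k / Gamma k / c))"
    by (intro AE_I2) simp
qed

lemma F2_int: "k > 0 \<Longrightarrow> m > 0 \<Longrightarrow> c > 0 \<Longrightarrow> integrable lborel (F2 k m c)"
proof (rule Bochner_Integration.integrable_bound[where f="\<lambda>t. gamma_pdf m t * (k powr k / Gamma k / c ^ 2 * (\<bar>k - 1\<bar> + k * ((k + 1) / k) powr (k + 1)))"])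
  assume k: "k > 0" and m: "m > 0" and c: "c > 0"
  show "integrable lborel (\<lambda>t. gamma_pdf m t * (k powr k / Gamma k / c ^ 2 * (\<bar>k - 1\<bar> + k * ((k + 1) / k) powr (k + 1))))"
    using pdf_integrable[OF m] by simp
  show "F2 k m c \<in> borel_measurable lborel" using F2_meas by simp
  have "\<And>t. \<bar>F2 k m c t\<bar> \<le> \<bar>gamma_pdf m t * (k powr k / Gamma k / c ^ 2 * (\<bar>k - 1\<bar> + k * ((k + 1) / k) powr (k + 1)))\<bar>"
    using order_trans[OF F2_bound[OF k m c] abs_ge_self] .
  then show "AE t in lborel. norm (F2 k m c t) \<le> norm (gamma_pdf m t * (k powr k / Gamma k / c ^ 2 * (\<bar>k - 1\<bar> + k * ((k + 1) / k) powr (k + 1))))"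
    by (intro AE_I2) simp
qed

definition H0 :: "real \<Rightarrow> real \<Rightarrow> real \<Rightarrow> real" where "H0 k m c = (LINT t|lborel. F0 k m c t)"
definition H1 :: "real \<Rightarrow> real \<Rightarrow> real \<Rightarrow> real" where "H1 k m c = (LINT t|lborel. F1 k m c t)"
definition H2 :: "real \<Rightarrow> real \<Rightarrow> real \<Rightarrow> real" where "H2 k m c = (LINT t|lborel. F2 k m c t)"

lemma H0_deriv:
  assumes k: "k > 0" and m: "m > 0" and c: "c > 0"
  shows "DERIV (H0 k m) c :> H1 k m c"
  unfolding H0_def H1_def
proof (rule deriv_under_int[where r="c / 2" and w="\<lambda>t. gamma_pdf m t * (k powr k / Gamma k / (c / 2))"])
  show "0 < c / 2" using c by simp
  show "integrable lborel (F0 k m y)" for y using F0_int k m by blast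
  show "F1 k m c \<in> borel_measurable lborel" using F1_meas by simp
  show "DERIV (\<lambda>y. F0 k m y t) y :> F1 k m y t" if "y \<in> ball c (c / 2)" for y t
  proof -
    have "y > c / 2" using that unfolding mem_ball dist_real_def by arith
    then show ?thesis using c by (intro F0_deriv k) auto
  qed
  show "\<bar>F1 k m y t\<bar> \<le> gamma_pdf m t * (k powr k / Gamma k / (c / 2))" if y: "y \<in> ball c (c / 2)" for y t
  proof -
    have y': "y > c / 2" using y unfolding mem_ball dist_real_def by arith
    have "\<bar>F1 k m y t\<bar> \<le> gamma_pdf m t * (k powr k / Gamma k / y)"
      using F1_bound k m y' c by simp
    also have "\<dots> \<le> gamma_pdf m t * (k powr k / Gamma k / (c / 2))"
      using y' c k m by (intro mult_left_mono divide_left_mono) (auto simp: pdf_nonneg Gamma_real_pos)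
    finally show ?thesis .
  qed
  show "integrable lborel (\<lambda>t. gamma_pdf m t * (k powr k / Gamma k / (c / 2)))"
    using pdf_integrable[OF m] by simp
qed

lemma H1_deriv:
  assumes k: "k > 0" and m: "m > 0" and c: "c > 0"
  shows "DERIV (H1 k m) c :> H2 k m c"
  unfolding H1_def H2_def
proof (rule deriv_under_int[where r="c / 2" and w="\<lambda>t. gamma_pdf m t * (k powr k / Gamma k / (c / 2) ^ 2 * (\<bar>k - 1\<bar> + k * ((k + 1) / k) powr (k + 1)))"])
  show "0 < c / 2" using c by simp
  show "integrable lborel (F1 k m y)" if "y \<in> ball c (c / 2)" for y
  proof -
    have "y > c / 2" using that unfolding mem_ball dist_real_def by arith
    then show ?thesis using c by (intro F1_int k m) auto
  qed
  show "F2 k m c \<in> borel_measurable lborel" using F2_meas by simp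
  show "DERIV (\<lambda>y. F1 k m y t) y :> F2 k m y t" if "y \<in> ball c (c / 2)" for y t
  proof -
    have "y > c / 2" using that unfolding mem_ball dist_real_def by arith
    then show ?thesis using c by (intro F1_deriv) auto
  qed
  show "\<bar>F2 k m y t\<bar> \<le> gamma_pdf m t * (k powr k / Gamma k / (c / 2) ^ 2 * (\<bar>k - 1\<bar> + k * ((k + 1) / k) powr (k + 1)))"
    if y: "y \<in> ball c (c / 2)" for y t
  proof -
    have y': "y > c / 2" using y unfolding mem_ball dist_real_def by arith
    have "\<bar>F2 k m y t\<bar> \<le> gamma_pdf m t * (k powr k / Gamma k / y ^ 2 * (\<bar>k - 1\<bar> + k * ((k + 1) / k) powr (k + 1)))"
      using F2_bound k m y' c by simp
    also have "\<dots> \<le> gamma_pdf m t * (k powr k / Gamma k / (c / 2) ^ 2 * (\<bar>k - 1\<bar> + k * ((k + 1) / k) powr (k + 1)))"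
      using y' c k m
      by (intro mult_left_mono mult_right_mono divide_left_mono power_mono)
         (auto simp: pdf_nonneg Gamma_real_pos intro!: add_nonneg_nonneg)
    finally show ?thesis .
  qed
  show "integrable lborel (\<lambda>t. gamma_pdf m t * (k powr k / Gamma k / (c / 2) ^ 2 * (\<bar>k - 1\<bar> + k * ((k + 1) / k) powr (k + 1))))"
    using pdf_integrable[OF m] by simp
qed

lemma F1_eq_t:
  assumes c: "c > 0"
  shows "F1 k m c t / c powr (k - 1) = gamma_pdf m t * (k powr k / Gamma k) * t powr (- k) * exp (- k * (c / t))"
proof (cases "t > 0")
  case True
  have tp: "t powr (k - 1) * t = t powr k"
  proof -
    have "t powr k = t powr ((k - 1) + 1)" by simp
    also have "\<dots> = t powr (k - 1) * t powr 1" by (rule powr_add)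
    finally show ?thesis using True by simp
  qed
  have "F1 k m c t / c powr (k - 1) = gamma_pdf m t * (k powr k / Gamma k) * exp (- k * (c / t)) * ((c / t) powr (k - 1) / t / c powr (k - 1))"
  proof -
    have pk: "gamma_pdf k (c / t) = k powr k / Gamma k * (c / t) powr (k - 1) * exp (- k * (c / t))"
      by (rule pdf_pos) (use c True in simp)
    show ?thesis unfolding F1_def pk by (simp add: divide_inverse algebra_simps)
  qed
  also have "(c / t) powr (k - 1) / t / c powr (k - 1) = 1 / (t powr (k - 1) * t)"
    using c True by (simp add: powr_divide)
  also have "\<dots> = t powr (- k)" unfolding tp using True by (simp add: powr_minus divide_inverse)
  finally show ?thesis by simp
next
  case False
  then show ?thesis unfolding F1_def by (simp add: pdf_nonpos)
qed

lemma F2_eq_t: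
  assumes c: "c > 0"
  shows "F2 k m c t / c powr (k - 2) = gamma_pdf m t * (k powr k / Gamma k) * t powr (- k) * ((k - 1) - k * (c / t)) * exp (- k * (c / t))"
proof (cases "t > 0")
  case True
  define u where "u = c / t"
  have u: "u > 0" using c True by (simp add: u_def)
  have tp: "t powr (k - 2) * t ^ 2 = t powr k"
  proof -
    have "t powr k = t powr ((k - 2) + 2)" by simp
    also have "\<dots> = t powr (k - 2) * t powr 2" by (rule powr_add)
    finally show ?thesis using True by (simp add: powr_numeral)
  qed
  have up: "u powr (k - 1) = u powr (k - 2) * u"
  proof -
    have "u powr (k - 1) = u powr ((k - 2) + 1)" by simp
    also have "\<dots> = u powr (k - 2) * u powr 1" by (rule powr_add)
    finally show ?thesis using u by simp
  qed
  have "F2 k m c t / c powr (k - 2) = gamma_pdf m t * (k powr k / Gamma k) * ((k - 1) - k * u) * exp (- k * u) * (u powr (k - 2) / t ^ 2 / c powr (k - 2))"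
    unfolding F2_def dpdf_def u_def[symmetric] up by (simp add: divide_inverse algebra_simps)
  also have "u powr (k - 2) / t ^ 2 / c powr (k - 2) = 1 / (t powr (k - 2) * t ^ 2)"
    using c True by (simp add: powr_divide u_def)
  also have "\<dots> = t powr (- k)" unfolding tp using True by (simp add: powr_minus divide_inverse)
  finally show ?thesis by (simp add: u_def algebra_simps)
next
  case False
  then show ?thesis unfolding F2_def by (simp add: pdf_nonpos)
qed

definition Mk :: "real \<Rightarrow> real \<Rightarrow> real" where
  "Mk k m = Gamma (m - k) / (Gamma m * m powr (- k))"

lemma Mk_int:
  assumes m: "m > 0" and km: "k < m"
  shows "has_bochner_integral lborel (\<lambda>t. gamma_pdf m t * t powr (- k)) (Mk k m)"
proof -
  have "has_bochner_integral lborel (\<lambda>t. t powr (- k) * gamma_pdf m t) (Mk k m)"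
    unfolding Mk_def using pdf_moment[of m "- k"] m km by simp
  then show ?thesis by (simp add: mult.commute)
qed

lemma H1_lim:
  assumes k: "k > 0" and km: "k < m"
  shows "((\<lambda>c. H1 k m c / c powr (k - 1)) \<longlongrightarrow> k powr k / Gamma k * Mk k m) (at_right 0)"
proof -
  have m: "m > 0" using k km by simp
  define B where "B = k powr k / Gamma k"
  have B: "B > 0" using k by (simp add: B_def Gamma_real_pos)
  define g where "g c t = gamma_pdf m t * B * t powr (- k) * exp (- k * (c / t))" for c t
  define f where "f t = gamma_pdf m t * B * t powr (- k)" for t
  have fint: "has_bochner_integral lborel f (B * Mk k m)"
    using has_bochner_integral_mult_left[OF Mk_int[OF m km], of B] unfolding f_def by (simp add: mult_ac)
  have eq: "eventually (\<lambda>c. H1 k m c / c powr (k - 1) = (LINT t|lborel. g c t)) (at_right 0)"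
    using eventually_at_right_less[of 0]
  proof (rule eventually_mono)
    fix c :: real assume c: "0 < c"
    have "H1 k m c / c powr (k - 1) = (LINT t|lborel. F1 k m c t / c powr (k - 1))"
      unfolding H1_def by simp
    also have "\<dots> = (LINT t|lborel. g c t)"
      by (intro Bochner_Integration.integral_cong refl) (simp add: F1_eq_t[OF c] g_def B_def)
    finally show "H1 k m c / c powr (k - 1) = (LINT t|lborel. g c t)" .
  qed
  have "((\<lambda>c. LINT t|lborel. g c t) \<longlongrightarrow> (LINT t|lborel. f t)) (at 0 within {0<..})"
  proof (rule DCT_within[where w=f])
    show "f \<in> borel_measurable lborel" unfolding f_def by measurable
    show "integrable lborel f" using fint by (auto simp: has_bochner_integral_iff)
    show "((\<lambda>c. g c t) \<longlongrightarrow> f t) (at 0 within {0<..})" for t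
    proof -
      have d: "((\<lambda>c. c / t) \<longlongrightarrow> 0) (at 0 within {0<..})"
      proof (cases "t = 0")
        case True then show ?thesis by simp
      next
        case False
        have "((\<lambda>c. c / t) \<longlongrightarrow> 0 / t) (at 0 within {0<..})" by (intro tendsto_intros False)
        then show ?thesis by simp
      qed
      have e: "((\<lambda>c. exp (- k * (c / t))) \<longlongrightarrow> exp (- k * 0)) (at 0 within {0<..})"
        by (rule tendsto_exp[OF tendsto_mult[OF tendsto_const d]])
      have "((\<lambda>c. g c t) \<longlongrightarrow> gamma_pdf m t * B * t powr (- k) * exp (- k * 0)) (at 0 within {0<..})"
        unfolding g_def by (intro tendsto_intros e)
      then show ?thesis by (simp add: f_def)
    qed
    show "eventually (\<lambda>c. g c \<in> borel_measurable lborel \<and> (\<forall>t. \<bar>g c t\<bar> \<le> f t)) (at 0 within {0<..})"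
      using eventually_at_right_less[of 0]
    proof (rule eventually_mono)
      fix c :: real assume c: "0 < c"
      show "g c \<in> borel_measurable lborel \<and> (\<forall>t. \<bar>g c t\<bar> \<le> f t)"
      proof (intro conjI allI)
        show "g c \<in> borel_measurable lborel" unfolding g_def by measurable
        fix t :: real
        show "\<bar>g c t\<bar> \<le> f t"
        proof (cases "t > 0")
          case True
          have "exp (- k * (c / t)) \<le> 1" using k c True by simp
          then have "f t * exp (- k * (c / t)) \<le> f t * 1"
            by (intro mult_left_mono) (use B m in \<open>auto simp: f_def pdf_nonneg\<close>)
          moreover have "0 \<le> f t * exp (- k * (c / t))" using B m by (auto simp: f_def pdf_nonneg)
          ultimately show ?thesis by (simp add: g_def f_def)
        next
          case False
          then show ?thesis by (simp add: g_def f_def pdf_nonpos)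
        qed
      qed
    qed
  qed
  then have "((\<lambda>c. LINT t|lborel. g c t) \<longlongrightarrow> B * Mk k m) (at_right 0)"
    using fint by (simp add: has_bochner_integral_iff)
  then show ?thesis
    using tendsto_cong[OF eq] by (simp add: B_def)
qed

lemma H2_lim:
  assumes k: "k > 0" and km: "k < m"
  shows "((\<lambda>c. H2 k m c / c powr (k - 2)) \<longlongrightarrow> (k - 1) * (k powr k / Gamma k * Mk k m)) (at_right 0)"
proof -
  have m: "m > 0" using k km by simp
  define B where "B = k powr k / Gamma k"
  have B: "B > 0" using k by (simp add: B_def Gamma_real_pos)
  define g where "g c t = gamma_pdf m t * B * t powr (- k) * ((k - 1) - k * (c / t)) * exp (- k * (c / t))" for c t
  define f where "f t = gamma_pdf m t * B * t powr (- k)" for t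
  have fint: "has_bochner_integral lborel f (B * Mk k m)"
    using has_bochner_integral_mult_left[OF Mk_int[OF m km], of B] unfolding f_def by (simp add: mult_ac)
  have eq: "eventually (\<lambda>c. H2 k m c / c powr (k - 2) = (LINT t|lborel. g c t)) (at_right 0)"
    using eventually_at_right_less[of 0]
  proof (rule eventually_mono)
    fix c :: real assume c: "0 < c"
    have "H2 k m c / c powr (k - 2) = (LINT t|lborel. F2 k m c t / c powr (k - 2))"
      unfolding H2_def by simp
    also have "\<dots> = (LINT t|lborel. g c t)"
      by (intro Bochner_Integration.integral_cong refl) (simp add: F2_eq_t[OF c] g_def B_def)
    finally show "H2 k m c / c powr (k - 2) = (LINT t|lborel. g c t)" .
  qed
  have "((\<lambda>c. LINT t|lborel. g c t) \<longlongrightarrow> (LINT t|lborel. (k - 1) * f t)) (at 0 within {0<..})"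
  proof (rule DCT_within[where w="\<lambda>t. (\<bar>k - 1\<bar> + 1) * f t"])
    show "(\<lambda>t. (k - 1) * f t) \<in> borel_measurable lborel" unfolding f_def by measurable
    show "integrable lborel (\<lambda>t. (\<bar>k - 1\<bar> + 1) * f t)" using fint by (auto simp: has_bochner_integral_iff)
    show "((\<lambda>c. g c t) \<longlongrightarrow> (k - 1) * f t) (at 0 within {0<..})" for t
    proof -
      have d: "((\<lambda>c. c / t) \<longlongrightarrow> 0) (at 0 within {0<..})"
      proof (cases "t = 0")
        case True then show ?thesis by simp
      next
        case False
        have "((\<lambda>c. c / t) \<longlongrightarrow> 0 / t) (at 0 within {0<..})" by (intro tendsto_intros False)
        then show ?thesis by simp
      qed
      have e: "((\<lambda>c. exp (- k * (c / t))) \<longlongrightarrow> exp (- k * 0)) (at 0 within {0<..})"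
        by (rule tendsto_exp[OF tendsto_mult[OF tendsto_const d]])
      have e2: "((\<lambda>c. (k - 1) - k * (c / t)) \<longlongrightarrow> (k - 1) - k * 0) (at 0 within {0<..})"
        by (rule tendsto_diff[OF tendsto_const tendsto_mult[OF tendsto_const d]])
      have "((\<lambda>c. g c t) \<longlongrightarrow> gamma_pdf m t * B * t powr (- k) * ((k - 1) - k * 0) * exp (- k * 0)) (at 0 within {0<..})"
        unfolding g_def by (intro tendsto_mult e e2 tendsto_const)
      then show ?thesis by (simp add: f_def mult_ac)
    qed
    show "eventually (\<lambda>c. g c \<in> borel_measurable lborel \<and> (\<forall>t. \<bar>g c t\<bar> \<le> (\<bar>k - 1\<bar> + 1) * f t)) (at 0 within {0<..})"
      using eventually_at_right_less[of 0]
    proof (rule eventually_mono)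
      fix c :: real assume c: "0 < c"
      show "g c \<in> borel_measurable lborel \<and> (\<forall>t. \<bar>g c t\<bar> \<le> (\<bar>k - 1\<bar> + 1) * f t)"
      proof (intro conjI allI)
        show "g c \<in> borel_measurable lborel" unfolding g_def by measurable
        fix t :: real
        show "\<bar>g c t\<bar> \<le> (\<bar>k - 1\<bar> + 1) * f t"
        proof (cases "t > 0")
          case True
          define u where "u = c / t"
          have u: "u > 0" using c True by (simp add: u_def)
          have e1: "exp (- k * u) \<le> 1" using k u by simp
          have e2: "u * exp (- k * u) \<le> 1 / k" using exp_bound[of 1 k u] k u by simp
          have "\<bar>((k - 1) - k * u) * exp (- k * u)\<bar> \<le> \<bar>k - 1\<bar> * exp (- k * u) + k * (u * exp (- k * u))"
          proof -
            have "((k - 1) - k * u) * exp (- k * u) = (k - 1) * exp (- k * u) - k * (u * exp (- k * u))"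
              by (simp add: algebra_simps)
            moreover have "\<bar>(k - 1) * exp (- k * u) - k * (u * exp (- k * u))\<bar> \<le> \<bar>(k - 1) * exp (- k * u)\<bar> + \<bar>k * (u * exp (- k * u))\<bar>"
              by (rule abs_triangle_ineq4)
            moreover have "\<bar>(k - 1) * exp (- k * u)\<bar> = \<bar>k - 1\<bar> * exp (- k * u)" by (simp add: abs_mult)
            moreover have "\<bar>k * (u * exp (- k * u))\<bar> = k * (u * exp (- k * u))" using k u by (simp add: abs_mult)
            ultimately show ?thesis by simp
          qed
          also have "\<dots> \<le> \<bar>k - 1\<bar> * 1 + k * (1 / k)"
            using e1 e2 k by (intro add_mono mult_left_mono) auto
          finally have bb: "\<bar>((k - 1) - k * u) * exp (- k * u)\<bar> \<le> \<bar>k - 1\<bar> + 1" using k by simp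
          have f0: "f t \<ge> 0" using B m by (auto simp: f_def pdf_nonneg)
          have "\<bar>g c t\<bar> = f t * \<bar>((k - 1) - k * u) * exp (- k * u)\<bar>"
            using f0 B pdf_nonneg[OF m, of t] by (simp add: g_def f_def u_def abs_mult mult_ac)
          also have "\<dots> \<le> f t * (\<bar>k - 1\<bar> + 1)" by (rule mult_left_mono[OF bb f0])
          finally show ?thesis by (simp add: mult_ac)
        next
          case False
          then show ?thesis by (simp add: g_def f_def pdf_nonpos)
        qed
      qed
    qed
  qed
  moreover have If: "integral\<^sup>L lborel f = B * Mk k m"
    using fint by (simp add: has_bochner_integral_iff)
  ultimately have "((\<lambda>c. LINT t|lborel. g c t) \<longlongrightarrow> (k - 1) * (B * Mk k m)) (at_right 0)"
    by (simp add: If)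
  then show ?thesis
    using tendsto_cong[OF eq] by (simp add: B_def)
qed

lemma H0_bound:
  assumes k: "k > 0" and km: "k < m" and c: "c > 0"
  shows "0 \<le> H0 k m c" "H0 k m c \<le> c powr k * (k powr k / Gamma k / k) * Mk k m"
proof -
  have m: "m > 0" using k km by simp
  show "0 \<le> H0 k m c" unfolding H0_def F0_def
    by (intro integral_nonneg_AE AE_I2 mult_nonneg_nonneg pdf_nonneg Gk_nonneg k m)
  have "H0 k m c \<le> (LINT t|lborel. c powr k * (k powr k / Gamma k / k) * (gamma_pdf m t * t powr (- k)))"
    unfolding H0_def
  proof (intro integral_mono F0_int k m)
    show "integrable lborel (\<lambda>t. c powr k * (k powr k / Gamma k / k) * (gamma_pdf m t * t powr (- k)))"
      using Mk_int[OF m km] by (auto simp: has_bochner_integral_iff)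
    fix t :: real
    show "F0 k m c t \<le> c powr k * (k powr k / Gamma k / k) * (gamma_pdf m t * t powr (- k))"
    proof (cases "t > 0")
      case True
      have "Gk k (c / t) \<le> k powr k / Gamma k * ((c / t) powr k / k)"
        using Gk_bound[OF k, of "c / t"] c True by simp
      also have "\<dots> = c powr k * (k powr k / Gamma k / k) * t powr (- k)"
      proof -
        have "(c / t) powr k = c powr k * t powr (- k)"
          by (simp only: powr_divide powr_minus) (simp add: divide_inverse)
        then show ?thesis by simp
      qed
      finally have "gamma_pdf m t * Gk k (c / t) \<le> gamma_pdf m t * (c powr k * (k powr k / Gamma k / k) * t powr (- k))"
        by (intro mult_left_mono pdf_nonneg m)
      then show ?thesis by (simp add: F0_def mult_ac)
    next
      case False
      then show ?thesis by (simp add: F0_def pdf_nonpos)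
    qed
  qed
  also have "\<dots> = c powr k * (k powr k / Gamma k / k) * Mk k m"
    using Mk_int[OF m km] by (simp add: has_bochner_integral_iff)
  finally show "H0 k m c \<le> c powr k * (k powr k / Gamma k / k) * Mk k m" .
qed

lemma H0_lim:
  assumes k: "k > 0" and km: "k < m"
  shows "((\<lambda>c. H0 k m c / c powr k) \<longlongrightarrow> k powr k / Gamma k * Mk k m / k) (at_right 0)"
proof -
  have m: "m > 0" using k km by simp
  have pk: "((\<lambda>c. c powr k) \<longlongrightarrow> 0) (at_right 0)"
    by (rule tendsto_zero_powrI[where b=k]) (use k in \<open>auto intro: tendsto_ident_at eventually_at_right_less[THEN eventually_mono]\<close>)
  have "((\<lambda>c. H0 k m c) \<longlongrightarrow> 0) (at_right 0)"
  proof (rule tendsto_sandwich[where f="\<lambda>_. 0" and h="\<lambda>c. c powr k * (k powr k / Gamma k / k) * Mk k m"])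
    show "eventually (\<lambda>c. 0 \<le> H0 k m c) (at_right 0)"
      using eventually_at_right_less[of 0] by eventually_elim (use H0_bound[OF k km] in auto)
    show "eventually (\<lambda>c. H0 k m c \<le> c powr k * (k powr k / Gamma k / k) * Mk k m) (at_right 0)"
      using eventually_at_right_less[of 0] by eventually_elim (use H0_bound[OF k km] in auto)
    show "((\<lambda>c. c powr k * (k powr k / Gamma k / k) * Mk k m) \<longlongrightarrow> 0) (at_right 0)"
      using tendsto_mult_right_zero[OF pk] tendsto_mult_left_zero by (metis (no_types) mult.assoc tendsto_mult_left_zero pk)
  qed simp
  then show ?thesis
  proof (rule lhopital_right_0[where g'="\<lambda>c. k * c powr (k - 1)" and f'="H1 k m"])
    show "((\<lambda>c. c powr k) \<longlongrightarrow> 0) (at_right 0)" by (fact pk)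
    show "eventually (\<lambda>c. c powr k \<noteq> 0) (at_right 0)"
      using eventually_at_right_less[of 0] by eventually_elim simp
    show "eventually (\<lambda>c. k * c powr (k - 1) \<noteq> 0) (at_right 0)"
      using eventually_at_right_less[of 0] by eventually_elim (use k in simp)
    show "eventually (\<lambda>c. DERIV (H0 k m) c :> H1 k m c) (at_right 0)"
      using eventually_at_right_less[of 0] by eventually_elim (rule H0_deriv[OF k m])
    show "eventually (\<lambda>c. DERIV (\<lambda>c. c powr k) c :> k * c powr (k - 1)) (at_right 0)"
      using eventually_at_right_less[of 0] by eventually_elim (rule has_real_derivative_powr)
    have "((\<lambda>c. H1 k m c / c powr (k - 1) / k) \<longlongrightarrow> k powr k / Gamma k * Mk k m / k) (at_right 0)"
      by (intro tendsto_divide H1_lim k km tendsto_const) (use k in simp)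
    then show "filterlim (\<lambda>c. H1 k m c / (k * c powr (k - 1))) (nhds (k powr k / Gamma k * Mk k m / k)) (at_right 0)"
      by (simp add: field_simps)
  qed
qed

lemma genK_rep:
  assumes g: "g > 0"
  shows "genK_cdf k m g x = H0 k m (x / g)"
  unfolding genK_cdf_def H0_def F0_def Gk_def
proof (intro Bochner_Integration.integral_cong refl)
  fix t :: real
  show "gamma_pdf m t * (LINT s|lborel. indicator {s. g * s * t \<le> x} s * gamma_pdf k s) =
        gamma_pdf m t * (LINT s|lborel. indicator {..x / g / t} s * gamma_pdf k s)"
  proof (cases "t > 0")
    case True
    have "{s. g * s * t \<le> x} = {..x / g / t}"
      using g True by (auto simp: field_simps)
    then show ?thesis by simp
  next
    case False
    then show ?thesis by (simp add: pdf_nonpos)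
  qed
qed

lemma ind_if: "indicator {s. g * s * t \<le> x} s = (if g * s * t \<le> (x::real) then 1 else (0::real))"
  by (simp add: indicator_def)

lemma genK_nn:
  assumes k: "k > 0" and m: "m > 0"
  shows "ennreal (genK_cdf k m g x) =
    (\<integral>\<^sup>+t. (\<integral>\<^sup>+s. ennreal (gamma_pdf m t * (if g * s * t \<le> x then 1 else 0) * gamma_pdf k s) \<partial>lborel) \<partial>lborel)"
proof -
  define I where "I t = (LINT s|lborel. (if g * s * t \<le> x then 1 else 0) * gamma_pdf k s)" for t
  have gk: "genK_cdf k m g x = (LINT t|lborel. gamma_pdf m t * I t)"
    unfolding genK_cdf_def I_def ind_if ..
  have intI: "integrable lborel (\<lambda>s. (if g * s * t \<le> x then 1 else 0) * gamma_pdf k s)" for t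
    using ind_int[OF k, of "{s. g * s * t \<le> x}"] by (simp add: ind_if)
  have I0: "0 \<le> I t" for t unfolding I_def
    by (intro integral_nonneg_AE AE_I2) (simp add: pdf_nonneg k)
  have I1: "I t \<le> 1" for t
  proof -
    have "I t \<le> (LINT s|lborel. gamma_pdf k s)" unfolding I_def
      by (intro integral_mono intI pdf_integrable k) (simp add: pdf_nonneg k)
    then show ?thesis using pdf_int1[OF k] by (simp add: has_bochner_integral_iff)
  qed
  have measI: "I \<in> borel_measurable lborel"
    unfolding I_def by measurable
  have int_out: "integrable lborel (\<lambda>t. gamma_pdf m t * I t)"
  proof (rule Bochner_Integration.integrable_bound[OF pdf_integrable[OF m]])
    show "(\<lambda>t. gamma_pdf m t * I t) \<in> borel_measurable lborel" using measI by measurable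
    show "AE t in lborel. norm (gamma_pdf m t * I t) \<le> norm (gamma_pdf m t)"
      using I0 I1 pdf_nonneg[OF m] by (intro AE_I2) (simp add: abs_mult mult_left_le)
  qed
  have "ennreal (genK_cdf k m g x) = (\<integral>\<^sup>+t. ennreal (gamma_pdf m t * I t) \<partial>lborel)"
    unfolding gk using int_out I0 pdf_nonneg[OF m] by (subst nn_integral_eq_integral) auto
  also have "\<dots> = (\<integral>\<^sup>+t. ennreal (gamma_pdf m t) * (\<integral>\<^sup>+s. ennreal ((if g * s * t \<le> x then 1 else 0) * gamma_pdf k s) \<partial>lborel) \<partial>lborel)"
  proof (intro nn_integral_cong)
    fix t :: real
    have "ennreal (I t) = (\<integral>\<^sup>+s. ennreal ((if g * s * t \<le> x then 1 else 0) * gamma_pdf k s) \<partial>lborel)"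
      unfolding I_def using intI[of t] by (subst nn_integral_eq_integral) (auto simp: pdf_nonneg k)
    then show "ennreal (gamma_pdf m t * I t) = ennreal (gamma_pdf m t) * (\<integral>\<^sup>+s. ennreal ((if g * s * t \<le> x then 1 else 0) * gamma_pdf k s) \<partial>lborel)"
      using I0 pdf_nonneg[OF m] by (simp add: ennreal_mult)
  qed
  also have "\<dots> = (\<integral>\<^sup>+t. (\<integral>\<^sup>+s. ennreal (gamma_pdf m t) * ennreal ((if g * s * t \<le> x then 1 else 0) * gamma_pdf k s) \<partial>lborel) \<partial>lborel)"
    by (intro nn_integral_cong nn_integral_cmult[symmetric]) measurable
  also have "\<dots> = (\<integral>\<^sup>+t. (\<integral>\<^sup>+s. ennreal (gamma_pdf m t * (if g * s * t \<le> x then 1 else 0) * gamma_pdf k s) \<partial>lborel) \<partial>lborel)"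
    by (intro nn_integral_cong) (simp add: ennreal_mult[symmetric] pdf_nonneg k m mult.assoc)
  finally show ?thesis .
qed

lemma genK_sym:
  assumes k: "k > 0" and m: "m > 0"
  shows "genK_cdf k m g x = genK_cdf m k g x"
proof -
  define F where "F s t = ennreal (gamma_pdf m t * (if g * s * t \<le> x then 1 else 0) * gamma_pdf k s)" for s t
  have fub: "(\<integral>\<^sup>+t. (\<integral>\<^sup>+s. F s t \<partial>lborel) \<partial>lborel) = (\<integral>\<^sup>+s. (\<integral>\<^sup>+t. F s t \<partial>lborel) \<partial>lborel)"
    by (rule lborel_pair.Fubini') (unfold F_def, measurable)
  have "ennreal (genK_cdf k m g x) = (\<integral>\<^sup>+t. (\<integral>\<^sup>+s. F s t \<partial>lborel) \<partial>lborel)"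
    unfolding genK_nn[OF k m] F_def ..
  also have "\<dots> = (\<integral>\<^sup>+s. (\<integral>\<^sup>+t. F s t \<partial>lborel) \<partial>lborel)" by (rule fub)
  also have "\<dots> = ennreal (genK_cdf m k g x)"
    unfolding genK_nn[OF m k] F_def
    by (intro nn_integral_cong) (simp add: mult_ac)
  finally have "ennreal (genK_cdf k m g x) = ennreal (genK_cdf m k g x)" .
  moreover have "0 \<le> genK_cdf k m g x" "0 \<le> genK_cdf m k g x"
    unfolding genK_cdf_def
    by (intro integral_nonneg_AE AE_I2 mult_nonneg_nonneg pdf_nonneg k m; simp add: pdf_nonneg k m)+
  ultimately show ?thesis by simp
qed

lemma mom1: assumes k: "k > 0" shows "has_bochner_integral lborel (\<lambda>s. s * gamma_pdf k s) 1"
proof -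
  have "has_bochner_integral lborel (\<lambda>s. s powr 1 * gamma_pdf k s) (Gamma (k + 1) / (Gamma k * k powr 1))"
    by (rule pdf_moment) (use k in auto)
  moreover have "(\<lambda>s. s powr 1 * gamma_pdf k s) = (\<lambda>s. s * gamma_pdf k s)"
    by (rule ext) (case_tac "s > 0", auto simp: pdf_nonpos)
  moreover have "Gamma (k + 1) / (Gamma k * k powr 1) = 1"
  proof -
    have nk: "k \<notin> \<int>\<^sub>\<le>\<^sub>0" using k nonpos_Ints_nonpos by fastforce
    show ?thesis using k Gamma_plus1[OF nk] by (simp add: Gamma_real_pos less_imp_neq[symmetric])
  qed
  ultimately show ?thesis by metis
qed

lemma mom2: assumes k: "k > 0" shows "has_bochner_integral lborel (\<lambda>s. s ^ 2 * gamma_pdf k s) ((k + 1) / k)"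
proof -
  have "has_bochner_integral lborel (\<lambda>s. s powr 2 * gamma_pdf k s) (Gamma (k + 2) / (Gamma k * k powr 2))"
    by (rule pdf_moment) (use k in auto)
  moreover have "(\<lambda>s. s powr 2 * gamma_pdf k s) = (\<lambda>s. s ^ 2 * gamma_pdf k s)"
    by (rule ext) (case_tac "s > 0", auto simp: pdf_nonpos powr_numeral)
  moreover have "Gamma (k + 2) / (Gamma k * k powr 2) = (k + 1) / k"
  proof -
    have "Gamma (k + 2) = (k + 1) * (k * Gamma k)"
    proof -
      have nk: "k \<notin> \<int>\<^sub>\<le>\<^sub>0" using k nonpos_Ints_nonpos by fastforce
      have nk1: "k + 1 \<notin> \<int>\<^sub>\<le>\<^sub>0" using k nonpos_Ints_nonpos by fastforce
      have "Gamma (k + 2) = Gamma ((k + 1) + 1)" by (simp add: add.assoc)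
      then show ?thesis using Gamma_plus1[OF nk1] Gamma_plus1[OF nk] by simp
    qed
    then show ?thesis using k by (simp add: powr_numeral Gamma_real_pos less_imp_neq[symmetric] power2_eq_square)
  qed
  ultimately show ?thesis by metis
qed

lemma genK_var_val:
  assumes k: "k > 0" and m: "m > 0"
  shows "genK_var k m g = g ^ 2 * ((k + 1) * (m + 1) / (k * m) - 1)"
proof -
  have inner: "(LINT s|lborel. (g * s * t - g)\<^sup>2 * gamma_pdf k s) = g ^ 2 * ((k + 1) / k) * t ^ 2 - 2 * g ^ 2 * t + g ^ 2" for t
  proof -
    have "has_bochner_integral lborel (\<lambda>s. (g ^ 2 * t ^ 2) * (s ^ 2 * gamma_pdf k s) - (2 * g ^ 2 * t) * (s * gamma_pdf k s) + g ^ 2 * gamma_pdf k s)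
       ((g ^ 2 * t ^ 2) * ((k + 1) / k) - (2 * g ^ 2 * t) * 1 + g ^ 2 * 1)"
      by (intro has_bochner_integral_add has_bochner_integral_diff has_bochner_integral_mult_right mom1 mom2 pdf_int1 k)
    moreover have "(\<lambda>s. (g ^ 2 * t ^ 2) * (s ^ 2 * gamma_pdf k s) - (2 * g ^ 2 * t) * (s * gamma_pdf k s) + g ^ 2 * gamma_pdf k s)
       = (\<lambda>s. (g * s * t - g)\<^sup>2 * gamma_pdf k s)"
      by (rule ext) (simp add: power2_eq_square algebra_simps)
    ultimately show ?thesis by (simp add: has_bochner_integral_iff algebra_simps)
  qed
  have "has_bochner_integral lborel (\<lambda>t. (g ^ 2 * ((k + 1) / k)) * (t ^ 2 * gamma_pdf m t) - (2 * g ^ 2) * (t * gamma_pdf m t) + g ^ 2 * gamma_pdf m t)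
       ((g ^ 2 * ((k + 1) / k)) * ((m + 1) / m) - (2 * g ^ 2) * 1 + g ^ 2 * 1)"
    by (intro has_bochner_integral_add has_bochner_integral_diff has_bochner_integral_mult_right mom1 mom2 pdf_int1 m)
  moreover have "(\<lambda>t. (g ^ 2 * ((k + 1) / k)) * (t ^ 2 * gamma_pdf m t) - (2 * g ^ 2) * (t * gamma_pdf m t) + g ^ 2 * gamma_pdf m t)
       = (\<lambda>t. gamma_pdf m t * (LINT s|lborel. (g * s * t - g)\<^sup>2 * gamma_pdf k s))"
    by (rule ext) (subst inner, simp add: algebra_simps)
  ultimately have "genK_var k m g = (g ^ 2 * ((k + 1) / k)) * ((m + 1) / m) - (2 * g ^ 2) * 1 + g ^ 2 * 1"
    unfolding genK_var_def by (simp add: has_bochner_integral_iff)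
  also have "\<dots> = g ^ 2 * ((k + 1) * (m + 1) / (k * m) - 1)"
    using k m by (simp add: field_simps)
  finally show ?thesis .
qed

lemma second_deriv:
  assumes k: "k > 0" and m: "m > 0" and gd: "gd > 0"
    and c0: "(lam - 1 + lam * x0) / gd > 0"
  shows "deriv (deriv (\<lambda>x. H0 k m ((lam - 1 + lam * x) / gd))) x0
       = H2 k m ((lam - 1 + lam * x0) / gd) * (lam / gd) * (lam / gd)"
proof -
  define c where "c x = (lam - 1 + lam * x) / gd" for x
  have dc: "DERIV c x :> lam / gd" for x
    unfolding c_def by (intro derivative_eq_intros) (use gd in auto)
  have U: "open {x. 0 < c x}" unfolding c_def
    by (intro open_Collect_less continuous_intros) (use gd in auto)
  have ev: "eventually (\<lambda>x. 0 < c x) (nhds x0)"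
    using eventually_nhds_in_open[OF U] c0 by (simp add: c_def)
  have d1: "DERIV (\<lambda>x. H0 k m (c x)) x :> H1 k m (c x) * (lam / gd)" if "0 < c x" for x
    by (rule DERIV_chain2[OF H0_deriv[OF k m that] dc])
  have evd: "eventually (\<lambda>x. deriv (\<lambda>x. H0 k m (c x)) x = H1 k m (c x) * (lam / gd)) (nhds x0)"
    using ev by eventually_elim (rule DERIV_imp_deriv[OF d1])
  have d2: "DERIV (\<lambda>x. H1 k m (c x) * (lam / gd)) x0 :> H2 k m (c x0) * (lam / gd) * (lam / gd)"
    by (intro DERIV_cmult_right DERIV_chain2[OF H1_deriv[OF k m] dc]) (use c0 in \<open>simp add: c_def\<close>)
  have "DERIV (deriv (\<lambda>x. H0 k m (c x))) x0 :> H2 k m (c x0) * (lam / gd) * (lam / gd)"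
    using d2 by (subst DERIV_cong_ev[OF refl evd refl])
  then show ?thesis unfolding c_def[symmetric] by (rule DERIV_imp_deriv)
qed

lemma lim_a_over: assumes a: "a > 0" shows "filterlim (\<lambda>gd::real. a / gd) (at_right 0) at_top"
proof -
  have "((\<lambda>gd::real. a / gd) \<longlongrightarrow> 0) at_top"
    by (rule tendsto_divide_0[OF tendsto_const]) (rule filterlim_at_top_imp_at_infinity[OF filterlim_ident])
  moreover have "eventually (\<lambda>gd::real. a / gd \<in> {0<..} \<and> a / gd \<noteq> 0) at_top"
    using eventually_gt_at_top[of 0] by eventually_elim (use a in auto)
  ultimately show ?thesis unfolding filterlim_at by auto
qed

lemma BM_eq:
  assumes k: "k > 0" and km: "k < m"
  shows "k powr k / Gamma k * Mk k m = Gamma (m - k) * (k * m) powr k / (Gamma k * Gamma m)"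
proof -
  have m: "m > 0" using k km by simp
  have "m powr (- k) = 1 / m powr k" by (simp add: powr_minus_divide)
  then show ?thesis unfolding Mk_def using k m
    by (simp add: powr_mult field_simps Gamma_real_pos less_imp_neq[symmetric])
qed

theorem lemma1:
  fixes Rs lam kd md ke me ge v :: real
  assumes "Rs > 0" and "lam = 2 powr Rs"
    and "kd > 0" and "md > 0" and "ke > 0" and "me > 0" and "ge > 0"
    and "kd \<noteq> md" and "v = min kd md"
  shows "(\<lambda>gd. sop_approx lam kd md ke me ge gd
           - gd powr (- v) *
             (Gamma \<bar>kd - md\<bar> * (kd * md) powr v * (lam - 1 + lam * ge) powr v
               / (Gamma kd * Gamma md))
             * (1 / v + (((ke + 1) * (me + 1) / (ke * me) - 1) * (v - 1) * ge\<^sup>2 * lam\<^sup>2)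
                   / (2 * (lam - 1 + lam * ge)\<^sup>2)))
         \<in> o[at_top](\<lambda>gd. gd powr (- v))"
proof -
  note Rs = assms(1) and lam_def = assms(2) and kd = assms(3) and md = assms(4)
    and ke = assms(5) and me = assms(6) and ge = assms(7) and kdmd = assms(8) and v_def = assms(9)
  define k where "k = min kd md"
  define m where "m = max kd md"
  have k: "k > 0" and km: "k < m" and m: "m > 0" and vk: "v = k"
    using kd md kdmd v_def by (auto simp: k_def m_def min_def max_def)
  have sym: "genK_cdf kd md g x = genK_cdf k m g x" for g x
  proof (cases "kd < md")
    case True then show ?thesis by (simp add: k_def m_def min_def max_def)
  next
    case False then show ?thesis using genK_sym[OF kd md] by (simp add: k_def m_def min_def max_def)
  qed
  have absd: "\<bar>kd - md\<bar> = m - k" and prodd: "kd * md = k * m" and gprod: "Gamma kd * Gamma md = Gamma k * Gamma m"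
    by (auto simp: k_def m_def min_def max_def)
  have lam1: "lam > 1"
  proof -
    have "2 powr 0 < 2 powr Rs" using Rs by (intro powr_less_mono) auto
    then show ?thesis using lam_def by simp
  qed
  define a where "a = lam - 1 + lam * ge"
  have a: "a > 0" using lam1 ge by (simp add: a_def add_pos_nonneg)
  define Vf where "Vf = (ke + 1) * (me + 1) / (ke * me) - 1"
  have V: "genK_var ke me ge = ge ^ 2 * Vf" unfolding Vf_def by (rule genK_var_val[OF ke me])
  define BM where "BM = k powr k / Gamma k * Mk k m"
  have sop_eq: "sop_approx lam kd md ke me ge gd = H0 k m (a / gd) + ge ^ 2 * Vf / 2 * (H2 k m (a / gd) * (lam / gd) * (lam / gd))"
    if gd: "gd > 0" for gd
  proof -
    have P: "(\<lambda>x. genK_cdf kd md gd (lam - 1 + lam * x)) = (\<lambda>x. H0 k m ((lam - 1 + lam * x) / gd))"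
      by (rule ext) (subst sym, rule genK_rep[OF gd])
    have dd: "deriv (deriv (\<lambda>x. H0 k m ((lam - 1 + lam * x) / gd))) ge = H2 k m (a / gd) * (lam / gd) * (lam / gd)"
      using second_deriv[OF k m gd, of lam ge] a gd by (simp add: a_def)
    show ?thesis unfolding sop_approx_def Let_def P dd V
      by (simp add: genK_rep[OF gd] sym a_def)
  qed
  define Q where "Q c = H0 k m c / c powr k * a powr k + ge ^ 2 * Vf / 2 * lam ^ 2 * (H2 k m c / c powr (k - 2)) * a powr (k - 2)" for c
  have Q_eq: "sop_approx lam kd md ke me ge gd / gd powr (- v) = Q (a / gd)" if gd: "gd > 0" for gd
  proof -
    define c where "c = a / gd"
    have c: "c > 0" using a gd by (simp add: c_def)
    have cg: "c * gd = a" using gd by (simp add: c_def)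
    have e1: "a powr k = c powr k * gd powr k" unfolding cg[symmetric] using c gd by (simp add: powr_mult)
    have e2: "a powr (k - 2) = c powr (k - 2) * gd powr (k - 2)" unfolding cg[symmetric] using c gd by (simp add: powr_mult)
    have e3: "gd powr (k - 2) = gd powr k / (gd * gd)"
      using gd by (simp add: powr_diff powr_numeral power2_eq_square)
    have "sop_approx lam kd md ke me ge gd / gd powr (- v) = sop_approx lam kd md ke me ge gd * gd powr k"
      using gd by (simp add: vk powr_minus divide_inverse)
    also have "\<dots> = H0 k m c * gd powr k + ge ^ 2 * Vf / 2 * lam ^ 2 * H2 k m c * (gd powr k / (gd * gd))"
      unfolding sop_eq[OF gd] c_def[symmetric] using gd by (simp add: field_simps power2_eq_square)
    also have "\<dots> = Q c"
      unfolding Q_def e1 e2 e3 using c gd by (simp add: field_simps)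
    finally show ?thesis by (simp add: c_def)
  qed
  define QL where "QL = BM / k * a powr k + ge ^ 2 * Vf / 2 * lam ^ 2 * ((k - 1) * BM) * a powr (k - 2)"
  have Qlim: "(Q \<longlongrightarrow> QL) (at_right 0)"
    unfolding Q_def QL_def BM_def
    by (intro tendsto_intros H0_lim[OF k km] H2_lim[OF k km])
  define T where "T = Gamma \<bar>kd - md\<bar> * (kd * md) powr v * (lam - 1 + lam * ge) powr v / (Gamma kd * Gamma md)
             * (1 / v + (((ke + 1) * (me + 1) / (ke * me) - 1) * (v - 1) * ge\<^sup>2 * lam\<^sup>2) / (2 * (lam - 1 + lam * ge)\<^sup>2))"
  have QT: "QL = T"
  proof -
    have bm: "Gamma \<bar>kd - md\<bar> * (kd * md) powr v / (Gamma kd * Gamma md) = BM"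
      unfolding absd prodd gprod vk BM_def using BM_eq[OF k km] by simp
    have e: "a powr (k - 2) = a powr k / a ^ 2"
      using a by (simp add: powr_diff powr_numeral)
    have "T = BM * a powr k * (1 / k + (Vf * (k - 1) * ge\<^sup>2 * lam\<^sup>2) / (2 * a\<^sup>2))"
      unfolding T_def a_def[symmetric] Vf_def[symmetric] vk[symmetric] bm[symmetric] by (simp add: field_simps)
    also have "\<dots> = QL" unfolding QL_def e using a k by (simp add: field_simps power2_eq_square)
    finally show ?thesis by simp
  qed
  have lim: "((\<lambda>gd. Q (a / gd) - T) \<longlongrightarrow> QL - T) at_top"
    by (intro tendsto_diff tendsto_const filterlim_compose[OF Qlim lim_a_over[OF a]])
  show ?thesis
  proof (rule smalloI_tendsto)
    show "eventually (\<lambda>gd::real. gd powr (- v) \<noteq> 0) at_top"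
      using eventually_gt_at_top[of 0] by eventually_elim simp
    have "eventually (\<lambda>gd. Q (a / gd) - T =
       (sop_approx lam kd md ke me ge gd
           - gd powr (- v) *
             (Gamma \<bar>kd - md\<bar> * (kd * md) powr v * (lam - 1 + lam * ge) powr v
               / (Gamma kd * Gamma md))
             * (1 / v + (((ke + 1) * (me + 1) / (ke * me) - 1) * (v - 1) * ge\<^sup>2 * lam\<^sup>2)
                   / (2 * (lam - 1 + lam * ge)\<^sup>2))) / gd powr (- v)) at_top"
      using eventually_gt_at_top[of 0]
    proof eventually_elim
      case (elim gd)
      then show ?case using Q_eq[OF elim] unfolding T_def by (simp add: diff_divide_distrib)
    qed
    with lim show "((\<lambda>gd. (sop_approx lam kd md ke me ge gd
           - gd powr (- v) *
             (Gamma \<bar>kd - md\<bar> * (kd * md) powr v * (lam - 1 + lam * ge) powr v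
               / (Gamma kd * Gamma md))
             * (1 / v + (((ke + 1) * (me + 1) / (ke * me) - 1) * (v - 1) * ge\<^sup>2 * lam\<^sup>2)
                   / (2 * (lam - 1 + lam * ge)\<^sup>2))) / gd powr (- v)) \<longlongrightarrow> 0) at_top"
      using QT by (simp add: tendsto_cong)
  qed
qed

end
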